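(* In the setting of the context (with $p>L$), for all $x\in X$, $y\in Y$, $z\in\mathbb{R}^n$ we have $\phi(x,y,z)\ge\underline{f}$.
   Context: $X\subseteq\mathbb{R}^n$ nonempty closed convex, $Y\subseteq\mathbb{R}^m$ nonempty closed convex compact, $f$ continuously differentiable with $f(x,\cdot)$ concave, $\nabla_xf,\nabla_yf$ $L$-Lipschitz, and $\psi(x)=\max_{y\in Y}f(x,y)\ge\underline{f}$ for all $x\in X$, with $\underline{f}$ finite. $K(x,z;y)=f(x,y)+\frac p2\|x-z\|^2$; $d(y,z)=\min_{x\in X}K(x,z;y)$; $P(z)=\min_{x\in X}\max_{y\in Y}K(x,z;y)$; $\phi(x,y,z)=K(x,z;y)-2d(y,z)+2P(z)$. *)

theory Defs
  imports "HOL-Analysis.Analysis"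
begin

definition Kfun :: "('a::euclidean_space \<Rightarrow> 'b::euclidean_space \<Rightarrow> real) \<Rightarrow> real \<Rightarrow> 'a \<Rightarrow> 'a \<Rightarrow> 'b \<Rightarrow> real"
  where "Kfun f p x z y = f x y + p / 2 * (norm (x - z))\<^sup>2"

definition dfun :: "('a::euclidean_space \<Rightarrow> 'b::euclidean_space \<Rightarrow> real) \<Rightarrow> real \<Rightarrow> 'a set \<Rightarrow> 'b \<Rightarrow> 'a \<Rightarrow> real"
  where "dfun f p X y z = (INF x\<in>X. Kfun f p x z y)"

definition Pfun :: "('a::euclidean_space \<Rightarrow> 'b::euclidean_space \<Rightarrow> real) \<Rightarrow> real \<Rightarrow> 'a set \<Rightarrow> 'b set \<Rightarrow> 'a \<Rightarrow> real"
  where "Pfun f p X Y z = (INF x\<in>X. SUP y\<in>Y. Kfun f p x z y)"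

definition phifun :: "('a::euclidean_space \<Rightarrow> 'b::euclidean_space \<Rightarrow> real) \<Rightarrow> real \<Rightarrow> 'a set \<Rightarrow> 'b set \<Rightarrow> 'a \<Rightarrow> 'b \<Rightarrow> 'a \<Rightarrow> real"
  where "phifun f p X Y x y z = Kfun f p x z y - 2 * dfun f p X y z + 2 * Pfun f p X Y z"

end

theory Submission imports Defs begin

lemma partial_x:
  fixes f :: "'a::euclidean_space \<Rightarrow> 'b::euclidean_space \<Rightarrow> real"
  assumes deriv: "\<And>x y. ((\<lambda>(u, v). f u v) has_derivative
                   (\<lambda>(h, k). gx x y \<bullet> h + gy x y \<bullet> k)) (at (x, y))"
  shows "((\<lambda>u. f u y) has_derivative (\<lambda>h. gx u y \<bullet> h)) (at u)"
proof -
  have l: "((\<lambda>u. (u, y)) has_derivative (\<lambda>h. (h, 0))) (at u)"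
    by (auto intro!: derivative_eq_intros)
  from has_derivative_compose[OF l deriv[of u y]] show ?thesis by simp
qed

lemma descent:
  fixes f :: "'a::euclidean_space \<Rightarrow> 'b::euclidean_space \<Rightarrow> real"
  assumes deriv: "\<And>x y. ((\<lambda>(u, v). f u v) has_derivative
                   (\<lambda>(h, k). gx x y \<bullet> h + gy x y \<bullet> k)) (at (x, y))"
    and lipx: "\<And>x y x' y'. norm (gx x y - gx x' y') \<le> L * norm ((x, y) - (x', y'))"
  shows "f x y \<ge> f z y + gx z y \<bullet> (x - z) - L / 2 * (norm (x - z))\<^sup>2"
proof -
  define d where "d = x - z"
  define h where "h = (\<lambda>t::real. f (z + t *\<^sub>R d) y - t * (gx z y \<bullet> d) + L / 2 * t\<^sup>2 * (norm d)\<^sup>2)"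
  have D: "(h has_real_derivative ((gx (z + t *\<^sub>R d) y - gx z y) \<bullet> d + L * t * (norm d)\<^sup>2)) (at t)" for t
  proof -
    have l: "((\<lambda>t. z + t *\<^sub>R d) has_derivative (\<lambda>s. s *\<^sub>R d)) (at t)"
      by (auto intro!: derivative_eq_intros)
    have c: "((\<lambda>t. f (z + t *\<^sub>R d) y) has_derivative (\<lambda>s. gx (z + t *\<^sub>R d) y \<bullet> (s *\<^sub>R d))) (at t)"
      using has_derivative_compose[OF l partial_x[OF deriv]] by simp
    have c': "((\<lambda>t. f (z + t *\<^sub>R d) y) has_real_derivative (gx (z + t *\<^sub>R d) y \<bullet> d)) (at t)"
      by (rule has_derivative_imp_has_field_derivative[OF c]) simp
    have e1: "((\<lambda>t. t * (gx z y \<bullet> d)) has_real_derivative (gx z y \<bullet> d)) (at t)"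
      using DERIV_cmult_right[OF DERIV_ident[of "at t"], where c="gx z y \<bullet> d"] by simp
    have e2: "((\<lambda>t. L / 2 * t\<^sup>2 * (norm d)\<^sup>2) has_real_derivative (L / 2 * (2 * t) * (norm d)\<^sup>2)) (at t)"
      using DERIV_cmult_right[OF DERIV_cmult[OF DERIV_pow[where n=2 and x=t and s=UNIV], where c="L/2"], where c="(norm d)\<^sup>2"] by simp
    have "(h has_real_derivative (gx (z + t *\<^sub>R d) y \<bullet> d - gx z y \<bullet> d + L / 2 * (2 * t) * (norm d)\<^sup>2)) (at t)"
      unfolding h_def by (intro DERIV_add DERIV_diff c' e1 e2)
    then show ?thesis by (simp add: inner_diff_left)
  qed
  have nn: "(gx (z + t *\<^sub>R d) y - gx z y) \<bullet> d + L * t * (norm d)\<^sup>2 \<ge> 0" if "0 \<le> t" for t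
  proof -
    have "norm (gx (z + t *\<^sub>R d) y - gx z y) \<le> L * norm ((z + t *\<^sub>R d, y) - (z, y))"
      by (rule lipx)
    also have "norm ((z + t *\<^sub>R d, y) - (z, y)) = t * norm d"
      using that by (simp add: norm_Pair)
    finally have a: "norm (gx (z + t *\<^sub>R d) y - gx z y) \<le> L * (t * norm d)" .
    have "- ((gx (z + t *\<^sub>R d) y - gx z y) \<bullet> d) \<le> norm (gx (z + t *\<^sub>R d) y - gx z y) * norm d"
      by (metis Cauchy_Schwarz_ineq2 abs_le_iff inner_commute)
    also have "\<dots> \<le> L * (t * norm d) * norm d"
      using a by (simp add: mult_right_mono)
    finally show ?thesis by (simp add: power2_eq_square algebra_simps)
  qed
  have "h 0 \<le> h 1"
  proof (rule DERIV_nonneg_imp_nondecreasing[of 0 1])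
    fix t :: real assume "0 \<le> t" "t \<le> 1"
    then show "\<exists>y. (h has_real_derivative y) (at t) \<and> 0 \<le> y"
      using D[of t] nn[of t] by blast
  qed simp
  then show ?thesis unfolding h_def d_def by simp
qed


lemma partial_y:
  fixes f :: "'a::euclidean_space \<Rightarrow> 'b::euclidean_space \<Rightarrow> real"
  assumes deriv: "\<And>x y. ((\<lambda>(u, v). f u v) has_derivative
                   (\<lambda>(h, k). gx x y \<bullet> h + gy x y \<bullet> k)) (at (x, y))"
  shows "((\<lambda>v. f u v) has_derivative (\<lambda>k. gy u v \<bullet> k)) (at v)"
proof -
  have l: "((\<lambda>v. (u, v)) has_derivative (\<lambda>k. (0, k))) (at v)"
    by (auto intro!: derivative_eq_intros)
  from has_derivative_compose[OF l deriv[of u v]] show ?thesis by simp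
qed

lemma quad_bound:
  fixes c a r :: real
  assumes "c > 0"
  shows "c / 2 * r\<^sup>2 - a * r \<ge> - (a\<^sup>2 / (2 * c))"
proof -
  have "0 \<le> (c * r - a)\<^sup>2" by simp
  then have "0 \<le> c * (c / 2 * r\<^sup>2 - a * r) + a\<^sup>2 / 2"
    by (simp add: power2_eq_square algebra_simps)
  then have "- (a\<^sup>2 / 2) \<le> c * (c / 2 * r\<^sup>2 - a * r)" by linarith
  then show ?thesis using assms
    by (simp add: field_simps)
qed

theorem lemma3:
  fixes f :: "'a::euclidean_space \<Rightarrow> 'b::euclidean_space \<Rightarrow> real"
    and gx :: "'a \<Rightarrow> 'b \<Rightarrow> 'a" and gy :: "'a \<Rightarrow> 'b \<Rightarrow> 'b"
    and X :: "'a set" and Y :: "'b set" and L p flow :: real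
  assumes X: "X \<noteq> {}" "closed X" "convex X"
    and Y: "Y \<noteq> {}" "closed Y" "convex Y" "compact Y"
    and deriv: "\<And>x y. ((\<lambda>(u, v). f u v) has_derivative
                   (\<lambda>(h, k). gx x y \<bullet> h + gy x y \<bullet> k)) (at (x, y))"
    and cont: "continuous_on UNIV (\<lambda>(u, v). gx u v)" "continuous_on UNIV (\<lambda>(u, v). gy u v)"
    and conc: "\<And>x. concave_on UNIV (f x)"
    and lipx: "\<And>x y x' y'. norm (gx x y - gx x' y') \<le> L * norm ((x, y) - (x', y'))"
    and lipy: "\<And>x y x' y'. norm (gy x y - gy x' y') \<le> L * norm ((x, y) - (x', y'))"
    and lower: "\<And>x. x \<in> X \<Longrightarrow> (SUP y\<in>Y. f x y) \<ge> flow"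
    and pL: "p > L"
  shows "\<forall>x\<in>X. \<forall>y\<in>Y. \<forall>z. phifun f p X Y x y z \<ge> flow"
proof (intro ballI allI)
  fix x y z assume xX: "x \<in> X" and yY: "y \<in> Y"
  have contY: "continuous_on Y (\<lambda>v. Kfun f p u z v)" for u
  proof -
    have "continuous_on Y (\<lambda>v. f u v)"
      using has_derivative_continuous[OF partial_y[OF deriv]]
      by (simp add: continuous_at_imp_continuous_on)
    then show ?thesis unfolding Kfun_def by (intro continuous_intros)
  qed
  have bddY: "bdd_above ((\<lambda>v. Kfun f p u z v) ` Y)" for u
    by (intro bounded_imp_bdd_above compact_imp_bounded compact_continuous_image contY Y(4))
  define B where "B = f z y - (norm (gx z y))\<^sup>2 / (2 * (p - L))"
  have Klow: "Kfun f p u z y \<ge> B" for u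
  proof -
    have "f u y \<ge> f z y + gx z y \<bullet> (u - z) - L / 2 * (norm (u - z))\<^sup>2"
      by (rule descent[OF deriv lipx])
    moreover have "gx z y \<bullet> (u - z) \<ge> - (norm (gx z y) * norm (u - z))"
      using Cauchy_Schwarz_ineq2[of "gx z y" "u - z"] by (auto simp: abs_le_iff)
    moreover have "(p - L) / 2 * (norm (u - z))\<^sup>2 - norm (gx z y) * norm (u - z)
        \<ge> - ((norm (gx z y))\<^sup>2 / (2 * (p - L)))"
      by (rule quad_bound) (use pL in simp)
    ultimately show ?thesis unfolding Kfun_def B_def by (simp add: algebra_simps)
  qed
  have bddX: "bdd_below ((\<lambda>u. Kfun f p u z y) ` X)"
    by (rule bdd_belowI2[where m=B]) (rule Klow)
  have Kd: "Kfun f p x z y \<ge> dfun f p X y z"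
    unfolding dfun_def by (rule cINF_lower[OF bddX xX])
  have SK: "(SUP v\<in>Y. Kfun f p u z v) \<ge> Kfun f p u z v" if "v \<in> Y" for u v
    by (rule cSUP_upper[OF that bddY])
  have Pd: "Pfun f p X Y z \<ge> dfun f p X y z"
    unfolding Pfun_def
  proof (rule cINF_greatest[OF X(1)])
    fix u assume "u \<in> X"
    have "dfun f p X y z \<le> Kfun f p u z y"
      unfolding dfun_def by (rule cINF_lower[OF bddX \<open>u \<in> X\<close>])
    also have "\<dots> \<le> (SUP v\<in>Y. Kfun f p u z v)" by (rule SK[OF yY])
    finally show "dfun f p X y z \<le> (SUP v\<in>Y. Kfun f p u z v)" .
  qed
  have Pf: "Pfun f p X Y z \<ge> flow"
    unfolding Pfun_def
  proof (rule cINF_greatest[OF X(1)])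
    fix u assume uX: "u \<in> X"
    have "(SUP v\<in>Y. f u v) \<le> (SUP v\<in>Y. Kfun f p u z v)"
    proof (rule cSUP_least[OF Y(1)])
      fix v assume "v \<in> Y"
      obtain b :: 'a where b: "b \<in> Basis" using nonempty_Basis by blast
      have "0 \<le> norm (gx b v - gx 0 v)" by simp
      also have "\<dots> \<le> L * norm ((b, v) - (0, v))" by (rule lipx)
      also have "norm ((b, v) - (0::'a, v)) = 1" using b by (simp add: norm_Pair)
      finally have "0 \<le> p" using pL by simp
      then have "f u v \<le> Kfun f p u z v"
        unfolding Kfun_def by simp
      also have "\<dots> \<le> (SUP v\<in>Y. Kfun f p u z v)" by (rule SK[OF \<open>v \<in> Y\<close>])
      finally show "f u v \<le> (SUP v\<in>Y. Kfun f p u z v)" .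
    qed
    then show "flow \<le> (SUP v\<in>Y. Kfun f p u z v)" using lower[OF uX] by linarith
  qed
  show "flow \<le> phifun f p X Y x y z"
    unfolding phifun_def using Kd Pd Pf by linarith
qed

end
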